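(* Let $D$ be a small category, $\mathcal F$ a collection of $D$-orbits, and $X$ a $D$-space admitting a (non-relative) $D$-CW structure of type $\mathcal F$. Then $X$ is a $D$-space of type $\mathcal F$.
   Context: A $D$-space is a functor $D\to\mathrm{Top}$; a $D$-orbit is a $D$-space whose colimit is a point. Topological spaces are regarded as constant $D$-spaces. A relative $D$-CW structure of type $\mathcal F$ on $X$ is a sequence $X^{-1}\hookrightarrow X^0\hookrightarrow X^1\hookrightarrow\cdots\hookrightarrow X$ with $X=\operatorname{colim}_i X^i$, such that for each $i\ge 0$, $X^i$ is the pushout of $X^{i-1}\leftarrow S^{i-1}\times A_i\hookrightarrow D^i\times A_i$, where each $A_i$ is a disjoint union of $D$-orbits in $\mathcal F$ (and $S^{-1}=\emptyset$). It is a (non-relative) $D$-CW structure if $X^{-1}$ is the constant empty $D$-space. For $x$ a point of $\operatorname{colim}_D X$, the orbit $O_x$ is the pullback of $X\to\operatorname{colim}_D X$ (constant $D$-space) along $\{x\}\hookrightarrow \operatorname{colim}_D X$. $X$ is of type $\mathcal F$ if $O_x\in\mathcal F$ for every $x\in\operatorname{colim}_D X$ (orbits being considered up to isomorphism). *)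

theory Defs
  imports "HOL-Analysis.Analysis"
begin

record ('o, 'm) cat =
  Ob :: "'o set"
  Ar :: "'m set"
  cdom :: "'m \<Rightarrow> 'o"
  ccod :: "'m \<Rightarrow> 'o"
  ccomp :: "'m \<Rightarrow> 'm \<Rightarrow> 'm"   (* ccomp g f = g o f *)
  cid :: "'o \<Rightarrow> 'm"

definition is_category :: "('o, 'm) cat \<Rightarrow> bool" where
  "is_category C \<longleftrightarrow>
     (\<forall>f\<in>Ar C. cdom C f \<in> Ob C \<and> ccod C f \<in> Ob C) \<and>
     (\<forall>a\<in>Ob C. cid C a \<in> Ar C \<and> cdom C (cid C a) = a \<and> ccod C (cid C a) = a) \<and>
     (\<forall>f\<in>Ar C. \<forall>g\<in>Ar C. ccod C f = cdom C g \<longrightarrow>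
        ccomp C g f \<in> Ar C \<and> cdom C (ccomp C g f) = cdom C f \<and> ccod C (ccomp C g f) = ccod C g) \<and>
     (\<forall>f\<in>Ar C. ccomp C (cid C (ccod C f)) f = f \<and> ccomp C f (cid C (cdom C f)) = f) \<and>
     (\<forall>f\<in>Ar C. \<forall>g\<in>Ar C. \<forall>h\<in>Ar C. ccod C f = cdom C g \<longrightarrow> ccod C g = cdom C h \<longrightarrow>
        ccomp C h (ccomp C g f) = ccomp C (ccomp C h g) f)"

record ('o, 'm, 'a) dsp =
  Sp :: "'o \<Rightarrow> 'a topology"
  Mp :: "'m \<Rightarrow> 'a \<Rightarrow> 'a"

definition is_dspace :: "('o, 'm) cat \<Rightarrow> ('o, 'm, 'a) dsp \<Rightarrow> bool" where
  "is_dspace C X \<longleftrightarrow>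
     (\<forall>f\<in>Ar C. continuous_map (Sp X (cdom C f)) (Sp X (ccod C f)) (Mp X f)) \<and>
     (\<forall>a\<in>Ob C. \<forall>x\<in>topspace (Sp X a). Mp X (cid C a) x = x) \<and>
     (\<forall>f\<in>Ar C. \<forall>g\<in>Ar C. ccod C f = cdom C g \<longrightarrow>
        (\<forall>x\<in>topspace (Sp X (cdom C f)). Mp X (ccomp C g f) x = Mp X g (Mp X f x)))"

text \<open>Natural transformations (maps of D-spaces), given on the carriers only.\<close>
definition is_dmap :: "('o, 'm) cat \<Rightarrow> ('o, 'm, 'a) dsp \<Rightarrow> ('o, 'm, 'b) dsp
    \<Rightarrow> ('o \<Rightarrow> 'a \<Rightarrow> 'b) \<Rightarrow> bool" where
  "is_dmap C X Y \<eta> \<longleftrightarrow>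
     (\<forall>a\<in>Ob C. continuous_map (Sp X a) (Sp Y a) (\<eta> a)) \<and>
     (\<forall>f\<in>Ar C. \<forall>x\<in>topspace (Sp X (cdom C f)).
        \<eta> (ccod C f) (Mp X f x) = Mp Y f (\<eta> (cdom C f) x))"

definition dspace_iso :: "('o, 'm) cat \<Rightarrow> ('o, 'm, 'a) dsp \<Rightarrow> ('o, 'm, 'b) dsp \<Rightarrow> bool" where
  "dspace_iso C X Y \<longleftrightarrow>
     (\<exists>\<eta> \<theta>. is_dmap C X Y \<eta> \<and> is_dmap C Y X \<theta> \<and>
        (\<forall>a\<in>Ob C. \<forall>x\<in>topspace (Sp X a). \<theta> a (\<eta> a x) = x) \<and>
        (\<forall>a\<in>Ob C. \<forall>y\<in>topspace (Sp Y a). \<eta> a (\<theta> a y) = y))"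

text \<open>The colimit of a D-space in Top has as underlying set the disjoint union of the
  spaces X(a) modulo the equivalence relation generated by x ~ X(f)(x).\<close>

definition colim_carrier :: "('o, 'm) cat \<Rightarrow> ('o, 'm, 'a) dsp \<Rightarrow> ('o \<times> 'a) set" where
  "colim_carrier C X = {p. fst p \<in> Ob C \<and> snd p \<in> topspace (Sp X (fst p))}"

definition colim_step :: "('o, 'm) cat \<Rightarrow> ('o, 'm, 'a) dsp \<Rightarrow> 'o \<times> 'a \<Rightarrow> 'o \<times> 'a \<Rightarrow> bool" where
  "colim_step C X p q \<longleftrightarrow>
     (\<exists>f\<in>Ar C. \<exists>x\<in>topspace (Sp X (cdom C f)). p = (cdom C f, x) \<and> q = (ccod C f, Mp X f x))"

definition colim_rel :: "('o, 'm) cat \<Rightarrow> ('o, 'm, 'a) dsp \<Rightarrow> 'o \<times> 'a \<Rightarrow> 'o \<times> 'a \<Rightarrow> bool" where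
  "colim_rel C X = (\<lambda>p q. colim_step C X p q \<or> colim_step C X q p)\<^sup>*\<^sup>*"

definition colim_class :: "('o, 'm) cat \<Rightarrow> ('o, 'm, 'a) dsp \<Rightarrow> 'o \<times> 'a \<Rightarrow> ('o \<times> 'a) set" where
  "colim_class C X p = {q \<in> colim_carrier C X. colim_rel C X p q}"

definition colim_points :: "('o, 'm) cat \<Rightarrow> ('o, 'm, 'a) dsp \<Rightarrow> ('o \<times> 'a) set set" where
  "colim_points C X = colim_class C X ` colim_carrier C X"

text \<open>The orbit O_x: pullback of X \<rightarrow> colim_D X along the point x.\<close>
definition orbit_at :: "('o, 'm) cat \<Rightarrow> ('o, 'm, 'a) dsp \<Rightarrow> ('o \<times> 'a) set \<Rightarrow> ('o, 'm, 'a) dsp" where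
  "orbit_at C X c = \<lparr>Sp = (\<lambda>a. subtopology (Sp X a) {y. (a, y) \<in> c}), Mp = Mp X\<rparr>"

definition is_dorbit :: "('o, 'm) cat \<Rightarrow> ('o, 'm, 'a) dsp \<Rightarrow> bool" where
  "is_dorbit C Orb \<longleftrightarrow> is_dspace C Orb \<and> (\<exists>c. colim_points C Orb = {c})"

definition of_type :: "('o, 'm) cat \<Rightarrow> ('o, 'm, 'e) dsp set \<Rightarrow> ('o, 'm, 'a) dsp \<Rightarrow> bool" where
  "of_type C F X \<longleftrightarrow> (\<forall>c\<in>colim_points C X. \<exists>Orb\<in>F. dspace_iso C (orbit_at C X c) Orb)"

text \<open>D^i and S^(i-1) realised inside nat => real (coordinates >= i vanish),
  with the product (= Euclidean) topology. S^(-1) is empty.\<close>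
definition disc_set :: "nat \<Rightarrow> (nat \<Rightarrow> real) set" where
  "disc_set i = {v. (\<forall>k\<ge>i. v k = 0) \<and> (\<Sum>k<i. (v k)\<^sup>2) \<le> 1}"

definition sphere_set :: "nat \<Rightarrow> (nat \<Rightarrow> real) set" where
  "sphere_set i = {v. (\<forall>k\<ge>i. v k = 0) \<and> (\<Sum>k<i. (v k)\<^sup>2) = 1}"

definition Dtop :: "nat \<Rightarrow> (nat \<Rightarrow> real) topology" where
  "Dtop i = subtopology (product_topology (\<lambda>_. euclideanreal) UNIV) (disc_set i)"

definition Stop :: "nat \<Rightarrow> (nat \<Rightarrow> real) topology" where
  "Stop i = subtopology (product_topology (\<lambda>_. euclideanreal) UNIV) (sphere_set i)"

definition cell_dsp :: "nat \<Rightarrow> ('o, 'm, 'c) dsp \<Rightarrow> ('o, 'm, (nat \<Rightarrow> real) \<times> 'c) dsp" where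
  "cell_dsp i A = \<lparr>Sp = (\<lambda>a. prod_topology (Dtop i) (Sp A a)), Mp = (\<lambda>f (v, x). (v, Mp A f x))\<rparr>"

definition bdry_dsp :: "nat \<Rightarrow> ('o, 'm, 'c) dsp \<Rightarrow> ('o, 'm, (nat \<Rightarrow> real) \<times> 'c) dsp" where
  "bdry_dsp i A = \<lparr>Sp = (\<lambda>a. prod_topology (Stop i) (Sp A a)), Mp = (\<lambda>f (v, x). (v, Mp A f x))\<rparr>"

definition sub_dsp :: "('o, 'm, 'c) dsp \<Rightarrow> 'c set \<Rightarrow> ('o, 'm, 'c) dsp" where
  "sub_dsp A q = \<lparr>Sp = (\<lambda>a. subtopology (Sp A a) q), Mp = Mp A\<rparr>"

text \<open>A is a coproduct (disjoint union) of D-spaces each isomorphic to a member of F: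
  it splits into D-invariant pieces that are open in every A(a).\<close>
definition is_orbit_coproduct :: "('o, 'm) cat \<Rightarrow> ('o, 'm, 'e) dsp set \<Rightarrow> ('o, 'm, 'c) dsp \<Rightarrow> bool" where
  "is_orbit_coproduct C F A \<longleftrightarrow>
     (\<exists>Q. (\<forall>q\<in>Q. \<forall>q'\<in>Q. q \<noteq> q' \<longrightarrow> q \<inter> q' = {}) \<and>
          (\<forall>a\<in>Ob C. topspace (Sp A a) \<subseteq> \<Union>Q) \<and>
          (\<forall>q\<in>Q. \<forall>a\<in>Ob C. openin (Sp A a) (topspace (Sp A a) \<inter> q)) \<and>
          (\<forall>q\<in>Q. \<forall>f\<in>Ar C. \<forall>x\<in>topspace (Sp A (cdom C f)) \<inter> q. Mp A f x \<in> q) \<and>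
          (\<forall>q\<in>Q. \<exists>Orb\<in>F. dspace_iso C (sub_dsp A q) Orb))"

text \<open>X is (objectwise, hence in D-spaces) the pushout of Y <- S^(i-1) x A -> D^i x A,
  with structure maps j : Y -> X and Phi : D^i x A -> X.\<close>
definition is_cell_pushout :: "('o, 'm) cat \<Rightarrow> nat \<Rightarrow> ('o, 'm, 'c) dsp \<Rightarrow> ('o, 'm, 'b) dsp
    \<Rightarrow> ('o, 'm, 'b) dsp \<Rightarrow> ('o \<Rightarrow> 'b \<Rightarrow> 'b) \<Rightarrow> ('o \<Rightarrow> (nat \<Rightarrow> real) \<times> 'c \<Rightarrow> 'b) \<Rightarrow> bool" where
  "is_cell_pushout C i A Y X j \<Phi> \<longleftrightarrow>
     is_dmap C Y X j \<and> is_dmap C (cell_dsp i A) X \<Phi> \<and>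
     (\<exists>\<phi>. is_dmap C (bdry_dsp i A) Y \<phi> \<and>
        (\<forall>a\<in>Ob C. \<forall>p\<in>topspace (Sp (bdry_dsp i A) a). \<Phi> a p = j a (\<phi> a p))) \<and>
     (\<forall>a\<in>Ob C.
        inj_on (j a) (topspace (Sp Y a)) \<and>
        inj_on (\<Phi> a) (topspace (Sp (cell_dsp i A) a) - topspace (Sp (bdry_dsp i A) a)) \<and>
        j a ` topspace (Sp Y a) \<inter>
          \<Phi> a ` (topspace (Sp (cell_dsp i A) a) - topspace (Sp (bdry_dsp i A) a)) = {} \<and>
        topspace (Sp X a) = j a ` topspace (Sp Y a) \<union>
          \<Phi> a ` (topspace (Sp (cell_dsp i A) a) - topspace (Sp (bdry_dsp i A) a)) \<and>
        (\<forall>U. U \<subseteq> topspace (Sp X a) \<longrightarrow>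
           (openin (Sp X a) U \<longleftrightarrow>
              openin (Sp Y a) {y \<in> topspace (Sp Y a). j a y \<in> U} \<and>
              openin (Sp (cell_dsp i A) a) {p \<in> topspace (Sp (cell_dsp i A) a). \<Phi> a p \<in> U})))"

definition is_seq_colim :: "('o, 'm) cat \<Rightarrow> (nat \<Rightarrow> ('o, 'm, 'b) dsp) \<Rightarrow> (nat \<Rightarrow> 'o \<Rightarrow> 'b \<Rightarrow> 'b)
    \<Rightarrow> ('o, 'm, 'a) dsp \<Rightarrow> (nat \<Rightarrow> 'o \<Rightarrow> 'b \<Rightarrow> 'a) \<Rightarrow> bool" where
  "is_seq_colim C Xs js X \<iota>s \<longleftrightarrow>
     (\<forall>i. is_dmap C (Xs i) X (\<iota>s i) \<and>
          (\<forall>a\<in>Ob C. \<forall>x\<in>topspace (Sp (Xs i) a). \<iota>s (Suc i) a (js i a x) = \<iota>s i a x) \<and>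
          (\<forall>a\<in>Ob C. inj_on (\<iota>s i a) (topspace (Sp (Xs i) a)))) \<and>
     (\<forall>a\<in>Ob C. topspace (Sp X a) = (\<Union>i. \<iota>s i a ` topspace (Sp (Xs i) a))) \<and>
     (\<forall>a\<in>Ob C. \<forall>U. U \<subseteq> topspace (Sp X a) \<longrightarrow>
        (openin (Sp X a) U \<longleftrightarrow>
           (\<forall>i. openin (Sp (Xs i) a) {x \<in> topspace (Sp (Xs i) a). \<iota>s i a x \<in> U})))"

text \<open>Relative D-CW structure of type F on X. Indexing: Xs 0 = X^(-1), Xs (Suc i) = X^i,
  As i = A_i (the i-cells), js i : X^(i-1) -> X^i, \<Phi>s i the characteristic map.\<close>
definition cw_structure :: "('o, 'm) cat \<Rightarrow> ('o, 'm, 'e) dsp set \<Rightarrow> ('o, 'm, 'a) dsp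
    \<Rightarrow> (nat \<Rightarrow> ('o, 'm, 'b) dsp) \<Rightarrow> (nat \<Rightarrow> 'o \<Rightarrow> 'b \<Rightarrow> 'b)
    \<Rightarrow> (nat \<Rightarrow> ('o, 'm, 'c) dsp) \<Rightarrow> (nat \<Rightarrow> 'o \<Rightarrow> (nat \<Rightarrow> real) \<times> 'c \<Rightarrow> 'b)
    \<Rightarrow> (nat \<Rightarrow> 'o \<Rightarrow> 'b \<Rightarrow> 'a) \<Rightarrow> bool" where
  "cw_structure C F X Xs js As \<Phi>s \<iota>s \<longleftrightarrow>
     (\<forall>i. is_dspace C (Xs i) \<and> is_dspace C (As i) \<and> is_orbit_coproduct C F (As i) \<and>
          is_cell_pushout C i (As i) (Xs i) (Xs (Suc i)) (js i) (\<Phi>s i)) \<and>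
     is_seq_colim C Xs js X \<iota>s"

text \<open>Non-relative: X^(-1) is the constant empty D-space.\<close>
definition dcw_structure where
  "dcw_structure C F X Xs js As \<Phi>s \<iota>s \<longleftrightarrow>
     cw_structure C F X Xs js As \<Phi>s \<iota>s \<and> (\<forall>a\<in>Ob C. topspace (Sp (Xs 0) a) = {})"

end

theory Submission
  imports Defs
begin


lemma top_Dtop[simp]: "topspace (Dtop i) = disc_set i" unfolding Dtop_def by simp
lemma top_Stop[simp]: "topspace (Stop i) = sphere_set i" unfolding Stop_def by simp
lemma top_cell[simp]: "topspace (Sp (cell_dsp i A) a) = disc_set i \<times> topspace (Sp A a)"
  by (simp add: cell_dsp_def)
lemma top_bdry[simp]: "topspace (Sp (bdry_dsp i A) a) = sphere_set i \<times> topspace (Sp A a)"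
  by (simp add: bdry_dsp_def)
lemma Mp_cell[simp]: "Mp (cell_dsp i A) f (w, z) = (w, Mp A f z)"
  by (simp add: cell_dsp_def)
lemma Mp_bdry[simp]: "Mp (bdry_dsp i A) f (w, z) = (w, Mp A f z)"
  by (simp add: bdry_dsp_def)

lemma sphere_sub_disc: "sphere_set i \<subseteq> disc_set i"
  unfolding sphere_set_def disc_set_def by auto

lemma zero_int: "(\<lambda>_. 0) \<in> disc_set i - sphere_set i"
  unfolding sphere_set_def disc_set_def by auto

lemma sphere_closed_P: "closedin (product_topology (\<lambda>_. euclideanreal) UNIV) (sphere_set i)"
proof -
  let ?P = "product_topology (\<lambda>_::nat. euclideanreal) UNIV"
  have c1: "closedin ?P {v \<in> topspace ?P. (\<Sum>k<i. (v k)\<^sup>2) \<in> {1}}"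
  proof (rule closedin_continuous_map_preimage[where Y=euclideanreal])
    show "continuous_map ?P euclideanreal (\<lambda>v. \<Sum>k<i. (v k)\<^sup>2)"
      by (intro continuous_map_sum continuous_map_real_pow continuous_map_product_projection) auto
  qed auto
  have c2: "closedin ?P {v \<in> topspace ?P. v k \<in> {0}}" for k
    by (rule closedin_continuous_map_preimage[where Y=euclideanreal])
       (auto intro: continuous_map_product_projection)
  have c3: "closedin ?P (\<Inter>k\<in>{i..}. {v \<in> topspace ?P. v k \<in> {0}})"
    by (rule closedin_Inter) (use c2 in auto)
  have "sphere_set i = (\<Inter>k\<in>{i..}. {v \<in> topspace ?P. v k \<in> {0}}) \<inter> {v \<in> topspace ?P. (\<Sum>k<i. (v k)\<^sup>2) \<in> {1}}"
    unfolding sphere_set_def by auto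
  then show ?thesis using c1 c3 by (simp add: closedin_Int)
qed

lemma sphere_closed_D: "closedin (Dtop i) (sphere_set i)"
  unfolding Dtop_def closedin_subtopology
  using sphere_closed_P sphere_sub_disc by blast

lemma Stop_sub: "Stop i = subtopology (Dtop i) (sphere_set i)"
  unfolding Stop_def Dtop_def subtopology_subtopology
  using sphere_sub_disc by (metis inf.absorb_iff2)

lemma bdry_closed_in_cell:
  assumes "closedin (Sp (bdry_dsp i A) a) S"
  shows "closedin (Sp (cell_dsp i A) a) S"
proof -
  have e: "Sp (bdry_dsp i A) a = subtopology (Sp (cell_dsp i A) a) (sphere_set i \<times> topspace (Sp A a))"
    by (simp add: bdry_dsp_def cell_dsp_def subtopology_Times Stop_sub)
  have "closedin (Sp (cell_dsp i A) a) (sphere_set i \<times> topspace (Sp A a))"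
    by (simp add: cell_dsp_def closedin_prod_Times_iff sphere_closed_D)
  then show ?thesis using assms e closedin_trans_full by metis
qed

lemma Hausdorff_Dtop: "Hausdorff_space (Dtop i)"
  unfolding Dtop_def
  by (intro Hausdorff_space_subtopology) (simp add: Hausdorff_space_product_topology)

lemma point_times_closed:
  assumes "w \<in> disc_set i" "closedin (Sp A a) K"
  shows "closedin (Sp (cell_dsp i A) a) ({w} \<times> K)"
  using assms by (simp add: cell_dsp_def closedin_prod_Times_iff closedin_Hausdorff_singleton Hausdorff_Dtop)




lemma cat_dom_cod:
  assumes "is_category C" "f \<in> Ar C"
  shows "cdom C f \<in> Ob C" "ccod C f \<in> Ob C"
  using assms unfolding is_category_def by auto

lemma colim_rel_map:
  assumes cat: "is_category C"
    and cl: "\<forall>f\<in>Ar C. \<forall>x\<in>topspace (Sp Y (cdom C f)). Mp Y f x \<in> topspace (Sp Y (ccod C f))"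
    and nat: "\<forall>f\<in>Ar C. \<forall>x\<in>topspace (Sp Y (cdom C f)). h (ccod C f) (Mp Y f x) = Mp Z f (h (cdom C f) x)"
    and into: "\<forall>a\<in>Ob C. \<forall>x\<in>topspace (Sp Y a). h a x \<in> topspace (Sp Z a)"
    and r: "colim_rel C Y p q" and p: "p \<in> colim_carrier C Y"
  shows "colim_rel C Z (fst p, h (fst p) (snd p)) (fst q, h (fst q) (snd q)) \<and> q \<in> colim_carrier C Y"
  using r[unfolded colim_rel_def]
proof (induction rule: rtranclp_induct)
  case base
  then show ?case using p by (simp add: colim_rel_def)
next
  case (step q r)
  from step.IH have IH1: "colim_rel C Z (fst p, h (fst p) (snd p)) (fst q, h (fst q) (snd q))"
    and qc: "q \<in> colim_carrier C Y" by auto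
  from step.hyps(2) show ?case
  proof
    assume "colim_step C Y q r"
    then obtain f x where f: "f \<in> Ar C" "x \<in> topspace (Sp Y (cdom C f))"
      "q = (cdom C f, x)" "r = (ccod C f, Mp Y f x)" unfolding colim_step_def by blast
    have "colim_step C Z (fst q, h (fst q) (snd q)) (fst r, h (fst r) (snd r))"
      unfolding colim_step_def using f nat into cat_dom_cod[OF cat f(1)] by (intro bexI[of _ f]) auto
    then have "colim_rel C Z (fst p, h (fst p) (snd p)) (fst r, h (fst r) (snd r))"
      unfolding colim_rel_def by (intro rtranclp.rtrancl_into_rtrancl[OF IH1[unfolded colim_rel_def]]) blast
    moreover have "r \<in> colim_carrier C Y"
      using f cl cat_dom_cod[OF cat f(1)] unfolding colim_carrier_def by auto
    ultimately show ?case by blast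
  next
    assume "colim_step C Y r q"
    then obtain f x where f: "f \<in> Ar C" "x \<in> topspace (Sp Y (cdom C f))"
      "r = (cdom C f, x)" "q = (ccod C f, Mp Y f x)" unfolding colim_step_def by blast
    have "colim_step C Z (fst r, h (fst r) (snd r)) (fst q, h (fst q) (snd q))"
      unfolding colim_step_def using f nat into cat_dom_cod[OF cat f(1)] by (intro bexI[of _ f]) auto
    then have "colim_rel C Z (fst p, h (fst p) (snd p)) (fst r, h (fst r) (snd r))"
      unfolding colim_rel_def by (intro rtranclp.rtrancl_into_rtrancl[OF IH1[unfolded colim_rel_def]]) blast
    moreover have "r \<in> colim_carrier C Y"
      using f cl cat_dom_cod[OF cat f(1)] unfolding colim_carrier_def by auto
    ultimately show ?case by blast
  qed
qed

lemma dmap_into: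
  assumes "is_dmap C Y Z h" "a \<in> Ob C" "x \<in> topspace (Sp Y a)"
  shows "h a x \<in> topspace (Sp Z a)"
proof -
  have "continuous_map (Sp Y a) (Sp Z a) (h a)" using assms unfolding is_dmap_def by blast
  then show ?thesis using assms(3) continuous_map_image_subset_topspace by blast
qed

lemma dspace_cl:
  assumes "is_dspace C Y" "f \<in> Ar C" "x \<in> topspace (Sp Y (cdom C f))"
  shows "Mp Y f x \<in> topspace (Sp Y (ccod C f))"
proof -
  have "continuous_map (Sp Y (cdom C f)) (Sp Y (ccod C f)) (Mp Y f)" using assms unfolding is_dspace_def by blast
  then show ?thesis using assms(3) continuous_map_image_subset_topspace by blast
qed

lemma orbit_all_related:
  assumes cat: "is_category C" and orb: "is_dorbit C Orb" and iso: "dspace_iso C S Orb"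
    and cl: "\<forall>f\<in>Ar C. \<forall>x\<in>topspace (Sp S (cdom C f)). Mp S f x \<in> topspace (Sp S (ccod C f))"
    and p: "p \<in> colim_carrier C S" and p': "p' \<in> colim_carrier C S"
  shows "colim_rel C S p p'"
proof -
  obtain \<eta> \<theta> where e: "is_dmap C S Orb \<eta>" and t: "is_dmap C Orb S \<theta>"
    and inv: "\<forall>a\<in>Ob C. \<forall>x\<in>topspace (Sp S a). \<theta> a (\<eta> a x) = x"
    using iso unfolding dspace_iso_def by blast
  obtain c0 where c0: "colim_points C Orb = {c0}" and dO: "is_dspace C Orb"
    using orb unfolding is_dorbit_def by blast
  define ep where "ep = (fst p, \<eta> (fst p) (snd p))"
  define ep' where "ep' = (fst p', \<eta> (fst p') (snd p'))"
  have epc: "ep \<in> colim_carrier C Orb" "ep' \<in> colim_carrier C Orb"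
    using p p' dmap_into[OF e] unfolding ep_def ep'_def colim_carrier_def by auto
  have "colim_class C Orb ep = c0" "colim_class C Orb ep' = c0"
    using epc c0 unfolding colim_points_def by auto
  moreover have "ep' \<in> colim_class C Orb ep'"
    using epc unfolding colim_class_def colim_rel_def by auto
  ultimately have "ep' \<in> colim_class C Orb ep" by simp
  then have r: "colim_rel C Orb ep ep'" unfolding colim_class_def by simp
  have "colim_rel C S (fst ep, \<theta> (fst ep) (snd ep)) (fst ep', \<theta> (fst ep') (snd ep'))"
    by (rule conjunct1[OF colim_rel_map[OF cat _ _ _ r epc(1)]])
       (use dspace_cl[OF dO] t dmap_into[OF t] in \<open>auto simp: is_dmap_def\<close>)
  moreover have "(fst ep, \<theta> (fst ep) (snd ep)) = p" "(fst ep', \<theta> (fst ep') (snd ep')) = p'"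
    using p p' inv unfolding ep_def ep'_def colim_carrier_def by auto
  ultimately show ?thesis by simp
qed

lemma dmap_comp:
  assumes cat: "is_category C" and e1: "is_dmap C X Y h1" and e2: "is_dmap C Y Z h2"
  shows "is_dmap C X Z (\<lambda>a x. h2 a (h1 a x))"
  unfolding is_dmap_def
proof (intro conjI ballI)
  fix a assume "a \<in> Ob C"
  then show "continuous_map (Sp X a) (Sp Z a) (\<lambda>x. h2 a (h1 a x))"
    using e1 e2 unfolding is_dmap_def using continuous_map_compose[unfolded o_def] by blast
next
  fix f x assume f: "f \<in> Ar C" and x: "x \<in> topspace (Sp X (cdom C f))"
  have "h1 (cdom C f) x \<in> topspace (Sp Y (cdom C f))"
    using dmap_into[OF e1 cat_dom_cod(1)[OF cat f] x] .
  then show "h2 (ccod C f) (h1 (ccod C f) (Mp X f x)) = Mp Z f (h2 (cdom C f) (h1 (cdom C f) x))"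
    using e1 e2 f x unfolding is_dmap_def by auto
qed

lemma iso_trans:
  assumes cat: "is_category C" and i1: "dspace_iso C X Y" and i2: "dspace_iso C Y Z"
  shows "dspace_iso C X Z"
proof -
  obtain e1 t1 where a1: "is_dmap C X Y e1" "is_dmap C Y X t1"
    "\<forall>a\<in>Ob C. \<forall>x\<in>topspace (Sp X a). t1 a (e1 a x) = x"
    "\<forall>a\<in>Ob C. \<forall>y\<in>topspace (Sp Y a). e1 a (t1 a y) = y"
    using i1 unfolding dspace_iso_def by blast
  obtain e2 t2 where a2: "is_dmap C Y Z e2" "is_dmap C Z Y t2"
    "\<forall>a\<in>Ob C. \<forall>x\<in>topspace (Sp Y a). t2 a (e2 a x) = x"
    "\<forall>a\<in>Ob C. \<forall>y\<in>topspace (Sp Z a). e2 a (t2 a y) = y"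
    using i2 unfolding dspace_iso_def by blast
  show ?thesis unfolding dspace_iso_def
  proof (intro exI conjI ballI)
    show "is_dmap C X Z (\<lambda>a x. e2 a (e1 a x))" by (rule dmap_comp[OF cat a1(1) a2(1)])
    show "is_dmap C Z X (\<lambda>a x. t1 a (t2 a x))" by (rule dmap_comp[OF cat a2(2) a1(2)])
  next
    fix a x assume "a \<in> Ob C" "x \<in> topspace (Sp X a)"
    then show "t1 a (t2 a (e2 a (e1 a x))) = x" using a1 a2 dmap_into[OF a1(1)] by simp
  next
    fix a x assume "a \<in> Ob C" "x \<in> topspace (Sp Z a)"
    then show "e2 a (e1 a (t1 a (t2 a x))) = x" using a1 a2 dmap_into[OF a2(2)] by simp
  qed
qed




lemma int_eq: "A \<times> T - B \<times> T = (A - B) \<times> T" by auto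

lemma Sp_sub[simp]: "Sp (sub_dsp A q) a = subtopology (Sp A a) q" by (simp add: sub_dsp_def)
lemma Mp_sub[simp]: "Mp (sub_dsp A q) = Mp A" by (simp add: sub_dsp_def)
lemma Sp_orbit[simp]: "Sp (orbit_at C X c) a = subtopology (Sp X a) {y. (a, y) \<in> c}" by (simp add: orbit_at_def)
lemma Mp_orbit[simp]: "Mp (orbit_at C X c) = Mp X" by (simp add: orbit_at_def)

primrec liftJ :: "(nat \<Rightarrow> 'o \<Rightarrow> 'b \<Rightarrow> 'b) \<Rightarrow> 'o \<Rightarrow> nat \<Rightarrow> nat \<Rightarrow> 'b \<Rightarrow> 'b" where
  "liftJ js a m 0 y = y"
| "liftJ js a m (Suc d) y = js (m + d) a (liftJ js a m d y)"

locale cwctx =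
  fixes C :: "('o, 'm) cat"
    and F :: "('o, 'm, 'e) dsp set"
    and X :: "('o, 'm, 'a) dsp"
    and Xs :: "nat \<Rightarrow> ('o, 'm, 'b) dsp"
    and js :: "nat \<Rightarrow> 'o \<Rightarrow> 'b \<Rightarrow> 'b"
    and As :: "nat \<Rightarrow> ('o, 'm, 'c) dsp"
    and \<Phi>s :: "nat \<Rightarrow> 'o \<Rightarrow> (nat \<Rightarrow> real) \<times> 'c \<Rightarrow> 'b"
    and \<iota>s :: "nat \<Rightarrow> 'o \<Rightarrow> 'b \<Rightarrow> 'a"
  assumes cat: "is_category C"
    and orbs: "\<forall>Orb\<in>F. is_dorbit C Orb"
    and dX: "is_dspace C X"
    and cw: "dcw_structure C F X Xs js As \<Phi>s \<iota>s"
begin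

abbreviation TX where "TX i a \<equiv> topspace (Sp (Xs i) a)"
abbreviation TA where "TA i a \<equiv> topspace (Sp (As i) a)"

lemma Xsd: "is_dspace C (Xs i)" and Asd: "is_dspace C (As i)"
  and cop: "is_orbit_coproduct C F (As i)"
  and po: "is_cell_pushout C i (As i) (Xs i) (Xs (Suc i)) (js i) (\<Phi>s i)"
  and sc: "is_seq_colim C Xs js X \<iota>s"
  using cw unfolding dcw_structure_def cw_structure_def by blast+

lemma emp0: "a \<in> Ob C \<Longrightarrow> TX 0 a = {}"
  using cw unfolding dcw_structure_def by blast

lemma j_dmap: "is_dmap C (Xs i) (Xs (Suc i)) (js i)"
  and Phi_dmap: "is_dmap C (cell_dsp i (As i)) (Xs (Suc i)) (\<Phi>s i)"
  and phi_ex: "\<exists>\<phi>. is_dmap C (bdry_dsp i (As i)) (Xs i) \<phi> \<and>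
        (\<forall>a\<in>Ob C. \<forall>p\<in>topspace (Sp (bdry_dsp i (As i)) a). \<Phi>s i a p = js i a (\<phi> a p))"
  using po unfolding is_cell_pushout_def by blast+

lemma po_a:
  assumes "a \<in> Ob C"
  shows "inj_on (js i a) (TX i a)"
    and "inj_on (\<Phi>s i a) ((disc_set i - sphere_set i) \<times> TA i a)"
    and "js i a ` TX i a \<inter> \<Phi>s i a ` ((disc_set i - sphere_set i) \<times> TA i a) = {}"
    and "TX (Suc i) a = js i a ` TX i a \<union> \<Phi>s i a ` ((disc_set i - sphere_set i) \<times> TA i a)"
    and "\<And>U. U \<subseteq> TX (Suc i) a \<Longrightarrow> (openin (Sp (Xs (Suc i)) a) U \<longleftrightarrow>
              openin (Sp (Xs i) a) {y \<in> TX i a. js i a y \<in> U} \<and>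
              openin (Sp (cell_dsp i (As i)) a) {p \<in> disc_set i \<times> TA i a. \<Phi>s i a p \<in> U})"
proof -
  note H = bspec[OF po[unfolded is_cell_pushout_def, THEN conjunct2, THEN conjunct2, THEN conjunct2] assms,
      unfolded top_cell top_bdry int_eq]
  show "inj_on (js i a) (TX i a)" using H by (rule conjunct1)
  show "inj_on (\<Phi>s i a) ((disc_set i - sphere_set i) \<times> TA i a)" using H[THEN conjunct2] by (rule conjunct1)
  show "js i a ` TX i a \<inter> \<Phi>s i a ` ((disc_set i - sphere_set i) \<times> TA i a) = {}"
    using H[THEN conjunct2, THEN conjunct2] by (rule conjunct1)
  show "TX (Suc i) a = js i a ` TX i a \<union> \<Phi>s i a ` ((disc_set i - sphere_set i) \<times> TA i a)"
    using H[THEN conjunct2, THEN conjunct2, THEN conjunct2] by (rule conjunct1)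
  fix U assume "U \<subseteq> TX (Suc i) a"
  then show "openin (Sp (Xs (Suc i)) a) U \<longleftrightarrow>
              openin (Sp (Xs i) a) {y \<in> TX i a. js i a y \<in> U} \<and>
              openin (Sp (cell_dsp i (As i)) a) {p \<in> disc_set i \<times> TA i a. \<Phi>s i a p \<in> U}"
    by (rule H[THEN conjunct2, THEN conjunct2, THEN conjunct2, THEN conjunct2, rule_format])
qed

lemma sc1: "\<forall>i. is_dmap C (Xs i) X (\<iota>s i) \<and>
          (\<forall>a\<in>Ob C. \<forall>x\<in>topspace (Sp (Xs i) a). \<iota>s (Suc i) a (js i a x) = \<iota>s i a x) \<and>
          (\<forall>a\<in>Ob C. inj_on (\<iota>s i a) (topspace (Sp (Xs i) a)))"
  using sc unfolding is_seq_colim_def by (rule conjunct1)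

lemma iota_dmap: "is_dmap C (Xs i) X (\<iota>s i)"
  using sc1 by simp

lemma iota_j: "a \<in> Ob C \<Longrightarrow> x \<in> TX i a \<Longrightarrow> \<iota>s (Suc i) a (js i a x) = \<iota>s i a x"
  using sc1 by simp

lemma iota_inj: "a \<in> Ob C \<Longrightarrow> inj_on (\<iota>s i a) (TX i a)"
  using sc1 by simp

lemma X_cover: "a \<in> Ob C \<Longrightarrow> topspace (Sp X a) = (\<Union>i. \<iota>s i a ` TX i a)"
  using sc[unfolded is_seq_colim_def, THEN conjunct2, THEN conjunct1] by simp

lemma X_open: "a \<in> Ob C \<Longrightarrow> U \<subseteq> topspace (Sp X a) \<Longrightarrow> (openin (Sp X a) U \<longleftrightarrow>
           (\<forall>i. openin (Sp (Xs i) a) {x \<in> TX i a. \<iota>s i a x \<in> U}))"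
  using sc[unfolded is_seq_colim_def, THEN conjunct2, THEN conjunct2] by simp

lemma closed_up:
  assumes a: "a \<in> Ob C" and K: "K \<subseteq> TX (Suc i) a"
    and c1: "closedin (Sp (Xs i) a) {y \<in> TX i a. js i a y \<in> K}"
    and c2: "closedin (Sp (cell_dsp i (As i)) a) {p \<in> topspace (Sp (cell_dsp i (As i)) a). \<Phi>s i a p \<in> K}"
  shows "closedin (Sp (Xs (Suc i)) a) K"
proof -
  have e1: "{y \<in> TX i a. js i a y \<in> TX (Suc i) a - K} = TX i a - {y \<in> TX i a. js i a y \<in> K}"
    using dmap_into[OF j_dmap a] by auto
  have e2: "{p \<in> topspace (Sp (cell_dsp i (As i)) a). \<Phi>s i a p \<in> TX (Suc i) a - K} =
      topspace (Sp (cell_dsp i (As i)) a) - {p \<in> topspace (Sp (cell_dsp i (As i)) a). \<Phi>s i a p \<in> K}"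
    using dmap_into[OF Phi_dmap a] by auto
  have "openin (Sp (Xs (Suc i)) a) (TX (Suc i) a - K)"
    using po_a(5)[OF a, of "TX (Suc i) a - K"] e1 e2 c1 c2 unfolding closedin_def by auto
  then show ?thesis using K unfolding closedin_def by blast
qed

lemma j_image_closed:
  assumes a: "a \<in> Ob C" and K: "closedin (Sp (Xs i) a) K"
  shows "closedin (Sp (Xs (Suc i)) a) (js i a ` K)"
proof -
  obtain \<phi> where ph: "is_dmap C (bdry_dsp i (As i)) (Xs i) \<phi>"
    "\<forall>a\<in>Ob C. \<forall>p\<in>topspace (Sp (bdry_dsp i (As i)) a). \<Phi>s i a p = js i a (\<phi> a p)"
    using phi_ex by blast
  have KT: "K \<subseteq> TX i a" using closedin_subset[OF K] .
  have s1: "{y \<in> TX i a. js i a y \<in> js i a ` K} = K"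
    using po_a(1)[OF a] KT by (auto simp: inj_on_def)
  have s2: "{p \<in> topspace (Sp (cell_dsp i (As i)) a). \<Phi>s i a p \<in> js i a ` K}
      = {p \<in> topspace (Sp (bdry_dsp i (As i)) a). \<phi> a p \<in> K}"
  proof (intro set_eqI iffI)
    fix p assume p: "p \<in> {p \<in> topspace (Sp (cell_dsp i (As i)) a). \<Phi>s i a p \<in> js i a ` K}"
    show "p \<in> {p \<in> topspace (Sp (bdry_dsp i (As i)) a). \<phi> a p \<in> K}"
    proof (cases "p \<in> topspace (Sp (bdry_dsp i (As i)) a)")
      case True
      then have "\<Phi>s i a p = js i a (\<phi> a p)" "\<phi> a p \<in> TX i a"
        using ph a dmap_into[OF ph(1) a] by auto
      then show ?thesis using True p po_a(1)[OF a] KT by (auto simp: inj_on_def)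
    next
      case False
      then have "p \<in> (disc_set i - sphere_set i) \<times> TA i a" using p by auto
      then show ?thesis using p po_a(3)[OF a] KT by blast
    qed
  next
    fix p assume p: "p \<in> {p \<in> topspace (Sp (bdry_dsp i (As i)) a). \<phi> a p \<in> K}"
    then have "\<Phi>s i a p = js i a (\<phi> a p)" using ph a by auto
    moreover have "p \<in> topspace (Sp (cell_dsp i (As i)) a)" using p sphere_sub_disc by auto
    ultimately show "p \<in> {p \<in> topspace (Sp (cell_dsp i (As i)) a). \<Phi>s i a p \<in> js i a ` K}"
      using p by auto
  qed
  have "closedin (Sp (bdry_dsp i (As i)) a) {p \<in> topspace (Sp (bdry_dsp i (As i)) a). \<phi> a p \<in> K}"
  proof -
    have "continuous_map (Sp (bdry_dsp i (As i)) a) (Sp (Xs i) a) (\<phi> a)"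
      using ph(1) a unfolding is_dmap_def by blast
    then show ?thesis by (rule closedin_continuous_map_preimage[OF _ K])
  qed
  then have c2: "closedin (Sp (cell_dsp i (As i)) a) {p \<in> topspace (Sp (cell_dsp i (As i)) a). \<Phi>s i a p \<in> js i a ` K}"
    unfolding s2 by (rule bdry_closed_in_cell)
  show ?thesis
  proof (rule closed_up[OF a _ _ c2])
    show "js i a ` K \<subseteq> TX (Suc i) a" using KT dmap_into[OF j_dmap a] by blast
    show "closedin (Sp (Xs i) a) {y \<in> TX i a. js i a y \<in> js i a ` K}" unfolding s1 by (rule K)
  qed
qed

end


context cwctx begin
lemma cell_point_closed:
  assumes a: "a \<in> Ob C" and w: "w \<in> disc_set i - sphere_set i" and K: "closedin (Sp (As i) a) K"
  shows "closedin (Sp (Xs (Suc i)) a) (\<Phi>s i a ` ({w} \<times> K))"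
proof -
  have KT: "K \<subseteq> TA i a" using closedin_subset[OF K] .
  have sub: "{w} \<times> K \<subseteq> (disc_set i - sphere_set i) \<times> TA i a" using w KT by auto
  have s1: "{y \<in> TX i a. js i a y \<in> \<Phi>s i a ` ({w} \<times> K)} = {}"
    using po_a(3)[OF a] sub by blast
  obtain \<phi> where ph: "is_dmap C (bdry_dsp i (As i)) (Xs i) \<phi>"
    "\<forall>a\<in>Ob C. \<forall>p\<in>topspace (Sp (bdry_dsp i (As i)) a). \<Phi>s i a p = js i a (\<phi> a p)"
    using phi_ex by blast
  have s2: "{p \<in> topspace (Sp (cell_dsp i (As i)) a). \<Phi>s i a p \<in> \<Phi>s i a ` ({w} \<times> K)} = {w} \<times> K"
  proof (intro set_eqI iffI)
    fix p assume p: "p \<in> {p \<in> topspace (Sp (cell_dsp i (As i)) a). \<Phi>s i a p \<in> \<Phi>s i a ` ({w} \<times> K)}"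
    show "p \<in> {w} \<times> K"
    proof (cases "p \<in> topspace (Sp (bdry_dsp i (As i)) a)")
      case True
      then have "\<Phi>s i a p = js i a (\<phi> a p)" "\<phi> a p \<in> TX i a"
        using ph a dmap_into[OF ph(1) a] by auto
      then have "\<Phi>s i a p \<in> js i a ` TX i a" by auto
      moreover have "\<Phi>s i a p \<in> \<Phi>s i a ` ((disc_set i - sphere_set i) \<times> TA i a)"
        using p sub by blast
      ultimately show ?thesis using po_a(3)[OF a, of i] by blast
    next
      case False
      then have "p \<in> (disc_set i - sphere_set i) \<times> TA i a" using p by auto
      moreover obtain b where b: "b \<in> K" "\<Phi>s i a p = \<Phi>s i a (w, b)" using p by auto
      ultimately have "p = (w, b)" using inj_onD[OF po_a(2)[OF a, of i]] sub by blast
      then show ?thesis using b by simp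
    qed
  next
    fix p assume "p \<in> {w} \<times> K"
    then show "p \<in> {p \<in> topspace (Sp (cell_dsp i (As i)) a). \<Phi>s i a p \<in> \<Phi>s i a ` ({w} \<times> K)}"
      using sub by auto
  qed
  have c1: "closedin (Sp (Xs i) a) {y \<in> TX i a. js i a y \<in> \<Phi>s i a ` ({w} \<times> K)}"
    unfolding s1 by simp
  have c2: "closedin (Sp (cell_dsp i (As i)) a) {p \<in> topspace (Sp (cell_dsp i (As i)) a). \<Phi>s i a p \<in> \<Phi>s i a ` ({w} \<times> K)}"
    unfolding s2 using point_times_closed[OF _ K, of w i] w by simp
  show ?thesis
  proof (rule closed_up[OF a _ c1 c2], rule image_subsetI)
    fix p assume "p \<in> {w} \<times> K"
    then have "p \<in> topspace (Sp (cell_dsp i (As i)) a)" using sub by auto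
    then show "\<Phi>s i a p \<in> TX (Suc i) a" by (rule dmap_into[OF Phi_dmap a])
  qed
qed


lemma J_in: "a \<in> Ob C \<Longrightarrow> y \<in> TX m a \<Longrightarrow> liftJ js a m d y \<in> TX (m + d) a"
proof (induction d)
  case 0 then show ?case by simp
next
  case (Suc d)
  then show ?case using dmap_into[OF j_dmap, of a "liftJ js a m d y" "m + d"] by simp
qed

lemma J_iota: "a \<in> Ob C \<Longrightarrow> y \<in> TX m a \<Longrightarrow> \<iota>s (m + d) a (liftJ js a m d y) = \<iota>s m a y"
proof (induction d)
  case 0 then show ?case by simp
next
  case (Suc d)
  then show ?case using iota_j[OF Suc.prems(1) J_in[OF Suc.prems, of d]] by simp
qed

lemma J_cont: "a \<in> Ob C \<Longrightarrow> continuous_map (Sp (Xs m) a) (Sp (Xs (m + d)) a) (liftJ js a m d)"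
proof (induction d)
  case 0 then show ?case by (simp add: continuous_map_id[unfolded id_def])
next
  case (Suc d)
  have "continuous_map (Sp (Xs (m + d)) a) (Sp (Xs (Suc (m + d))) a) (js (m + d) a)"
    using j_dmap Suc.prems unfolding is_dmap_def by blast
  then have "continuous_map (Sp (Xs m) a) (Sp (Xs (Suc (m + d))) a) (\<lambda>y. js (m + d) a (liftJ js a m d y))"
    using continuous_map_compose[OF Suc.IH[OF Suc.prems], unfolded o_def] by blast
  then show ?case by simp
qed

lemma J_closed: "a \<in> Ob C \<Longrightarrow> closedin (Sp (Xs m) a) K \<Longrightarrow> closedin (Sp (Xs (m + d)) a) (liftJ js a m d ` K)"
proof (induction d)
  case 0 then show ?case by simp
next
  case (Suc d)
  have "closedin (Sp (Xs (Suc (m + d))) a) (js (m + d) a ` (liftJ js a m d ` K))"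
    by (rule j_image_closed[OF Suc.prems(1) Suc.IH[OF Suc.prems]])
  then show ?case by (simp add: image_image)
qed

lemma X_closed:
  assumes a: "a \<in> Ob C" and K: "K \<subseteq> topspace (Sp X a)"
    and c: "\<And>l. closedin (Sp (Xs l) a) {x \<in> TX l a. \<iota>s l a x \<in> K}"
  shows "closedin (Sp X a) K"
proof -
  have "openin (Sp X a) (topspace (Sp X a) - K)"
  proof (subst X_open[OF a], blast, intro allI)
    fix l
    have "{x \<in> TX l a. \<iota>s l a x \<in> topspace (Sp X a) - K} = TX l a - {x \<in> TX l a. \<iota>s l a x \<in> K}"
      using dmap_into[OF iota_dmap a] by auto
    then show "openin (Sp (Xs l) a) {x \<in> TX l a. \<iota>s l a x \<in> topspace (Sp X a) - K}"
      using c[of l] unfolding closedin_def by simp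
  qed
  then show ?thesis using K unfolding closedin_def by blast
qed

lemma iota_closed:
  assumes a: "a \<in> Ob C" and K: "closedin (Sp (Xs n) a) K"
  shows "closedin (Sp X a) (\<iota>s n a ` K)"
proof (rule X_closed[OF a])
  have KT: "K \<subseteq> TX n a" using closedin_subset[OF K] .
  show "\<iota>s n a ` K \<subseteq> topspace (Sp X a)" using KT dmap_into[OF iota_dmap a] by blast
  fix l
  show "closedin (Sp (Xs l) a) {x \<in> TX l a. \<iota>s l a x \<in> \<iota>s n a ` K}"
  proof (cases "l \<le> n")
    case True
    then obtain d where n: "n = l + d" using le_Suc_ex by blast
    have "{x \<in> TX l a. \<iota>s l a x \<in> \<iota>s n a ` K} = {x \<in> TX l a. liftJ js a l d x \<in> K}"
    proof (intro set_eqI iffI)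
      fix x assume x: "x \<in> {x \<in> TX l a. \<iota>s l a x \<in> \<iota>s n a ` K}"
      then obtain k where k: "k \<in> K" "\<iota>s l a x = \<iota>s n a k" by auto
      have "\<iota>s n a (liftJ js a l d x) = \<iota>s n a k" using J_iota[OF a, of x l d] x k n by simp
      moreover have "liftJ js a l d x \<in> TX n a" using J_in[OF a, of x l d] x n by simp
      ultimately have "liftJ js a l d x = k" using iota_inj[OF a, of n] KT k(1) by (auto dest: inj_onD)
      then show "x \<in> {x \<in> TX l a. liftJ js a l d x \<in> K}" using x k by simp
    next
      fix x assume x: "x \<in> {x \<in> TX l a. liftJ js a l d x \<in> K}"
      then have "\<iota>s l a x = \<iota>s n a (liftJ js a l d x)" using J_iota[OF a, of x l d] n by simp
      then show "x \<in> {x \<in> TX l a. \<iota>s l a x \<in> \<iota>s n a ` K}" using x by auto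
    qed
    moreover have "closedin (Sp (Xs l) a) {x \<in> TX l a. liftJ js a l d x \<in> K}"
      using closedin_continuous_map_preimage[OF J_cont[OF a, of l d]] K n by simp
    ultimately show ?thesis by simp
  next
    case False
    then obtain d where l: "l = n + d" by (metis le_Suc_ex nat_le_linear)
    have "{x \<in> TX l a. \<iota>s l a x \<in> \<iota>s n a ` K} = liftJ js a n d ` K"
    proof (intro set_eqI iffI)
      fix x assume x: "x \<in> {x \<in> TX l a. \<iota>s l a x \<in> \<iota>s n a ` K}"
      then obtain k where k: "k \<in> K" "\<iota>s l a x = \<iota>s n a k" by auto
      have "\<iota>s l a (liftJ js a n d k) = \<iota>s l a x" using J_iota[OF a, of k n d] KT k l by auto
      moreover have "liftJ js a n d k \<in> TX l a" using J_in[OF a, of k n d] KT k l by auto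
      ultimately have "x = liftJ js a n d k" using iota_inj[OF a, of l] x by (auto dest: inj_onD)
      then show "x \<in> liftJ js a n d ` K" using k by simp
    next
      fix x assume "x \<in> liftJ js a n d ` K"
      then obtain k where k: "k \<in> K" "x = liftJ js a n d k" by auto
      then show "x \<in> {x \<in> TX l a. \<iota>s l a x \<in> \<iota>s n a ` K}"
        using J_in[OF a, of k n d] J_iota[OF a, of k n d] KT l by auto
    qed
    moreover have "closedin (Sp (Xs l) a) (liftJ js a n d ` K)" using J_closed[OF a K, of d] l by simp
    ultimately show ?thesis by simp
  qed
qed

lemma E_nat:
  assumes f: "f \<in> Ar C" and w: "w \<in> disc_set i" and u: "u \<in> TA i (cdom C f)"
  shows "Mp X f (\<iota>s (Suc i) (cdom C f) (\<Phi>s i (cdom C f) (w, u)))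
       = \<iota>s (Suc i) (ccod C f) (\<Phi>s i (ccod C f) (w, Mp (As i) f u))"
proof -
  have d: "cdom C f \<in> Ob C" using cat_dom_cod[OF cat f] by simp
  have p: "(w, u) \<in> topspace (Sp (cell_dsp i (As i)) (cdom C f))" using w u by simp
  have "\<Phi>s i (ccod C f) (Mp (cell_dsp i (As i)) f (w, u)) = Mp (Xs (Suc i)) f (\<Phi>s i (cdom C f) (w, u))"
    using Phi_dmap f p unfolding is_dmap_def by blast
  moreover have "\<Phi>s i (cdom C f) (w, u) \<in> TX (Suc i) (cdom C f)" by (rule dmap_into[OF Phi_dmap d p])
  moreover have "\<forall>y\<in>TX (Suc i) (cdom C f). \<iota>s (Suc i) (ccod C f) (Mp (Xs (Suc i)) f y) = Mp X f (\<iota>s (Suc i) (cdom C f) y)"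
    using iota_dmap f unfolding is_dmap_def by blast
  ultimately show ?thesis by simp
qed

lemma cell_exists:
  "a \<in> Ob C \<Longrightarrow> y \<in> TX n a \<Longrightarrow> \<exists>k w u. k < n \<and> w \<in> disc_set k - sphere_set k \<and> u \<in> TA k a \<and>
      \<iota>s n a y = \<iota>s (Suc k) a (\<Phi>s k a (w, u))"
proof (induction n arbitrary: y)
  case 0 then show ?case using emp0 by simp
next
  case (Suc n)
  have "y \<in> js n a ` TX n a \<union> \<Phi>s n a ` ((disc_set n - sphere_set n) \<times> TA n a)"
    using po_a(4)[OF Suc.prems(1), of n] Suc.prems(2) by simp
  then show ?case
  proof
    assume "y \<in> js n a ` TX n a"
    then obtain y' where y': "y' \<in> TX n a" "y = js n a y'" by auto
    obtain k w u where "k < n" "w \<in> disc_set k - sphere_set k" "u \<in> TA k a"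
        "\<iota>s n a y' = \<iota>s (Suc k) a (\<Phi>s k a (w, u))"
      using Suc.IH[OF Suc.prems(1) y'(1)] by blast
    moreover have "\<iota>s (Suc n) a y = \<iota>s n a y'" using iota_j[OF Suc.prems(1) y'(1)] y'(2) by simp
    ultimately show ?thesis by (intro exI[of _ k] exI[of _ w] exI[of _ u]) simp
  next
    assume "y \<in> \<Phi>s n a ` ((disc_set n - sphere_set n) \<times> TA n a)"
    then obtain w u where "w \<in> disc_set n - sphere_set n" "u \<in> TA n a" "y = \<Phi>s n a (w, u)" by auto
    then show ?thesis by (intro exI[of _ n] exI[of _ w] exI[of _ u]) simp
  qed
qed

lemma point_cell:
  assumes a: "a \<in> Ob C" and x: "x \<in> topspace (Sp X a)"
  shows "\<exists>k w u. w \<in> disc_set k - sphere_set k \<and> u \<in> TA k a \<and> x = \<iota>s (Suc k) a (\<Phi>s k a (w, u))"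
proof -
  obtain n y where "y \<in> TX n a" "x = \<iota>s n a y" using x X_cover[OF a] by auto
  then show ?thesis using cell_exists[OF a] by metis
qed

lemma lt_impossible:
  assumes a: "a \<in> Ob C" and ik: "i < k"
    and w: "w \<in> disc_set i - sphere_set i" and u: "u \<in> TA i a"
    and w': "w' \<in> disc_set k - sphere_set k" and u': "u' \<in> TA k a"
    and e: "\<iota>s (Suc i) a (\<Phi>s i a (w, u)) = \<iota>s (Suc k) a (\<Phi>s k a (w', u'))"
  shows False
proof -
  obtain d where k: "k = Suc i + d" using ik less_imp_Suc_add by fastforce
  define y where "y = \<Phi>s i a (w, u)"
  have y: "y \<in> TX (Suc i) a" unfolding y_def using dmap_into[OF Phi_dmap a, of "(w,u)" i] w u by simp
  define y2 where "y2 = liftJ js a (Suc i) d y"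
  have y2: "y2 \<in> TX k a" "\<iota>s k a y2 = \<iota>s (Suc i) a y"
    unfolding y2_def using J_in[OF a y, of d] J_iota[OF a y, of d] k by auto
  have "\<iota>s (Suc k) a (js k a y2) = \<iota>s (Suc k) a (\<Phi>s k a (w', u'))"
    using iota_j[OF a y2(1)] y2(2) e y_def by simp
  moreover have "js k a y2 \<in> TX (Suc k) a" using dmap_into[OF j_dmap a y2(1)] .
  moreover have "\<Phi>s k a (w', u') \<in> TX (Suc k) a" using dmap_into[OF Phi_dmap a, of "(w',u')" k] w' u' by simp
  ultimately have "js k a y2 = \<Phi>s k a (w', u')" using iota_inj[OF a, of "Suc k"] by (auto dest: inj_onD)
  moreover have "js k a y2 \<in> js k a ` TX k a" using y2(1) by simp
  moreover have "\<Phi>s k a (w', u') \<in> \<Phi>s k a ` ((disc_set k - sphere_set k) \<times> TA k a)" using w' u' by simp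
  ultimately show False using po_a(3)[OF a, of k] by (metis IntI empty_iff)
qed

lemma cell_unique:
  assumes a: "a \<in> Ob C"
    and w: "w \<in> disc_set i - sphere_set i" and u: "u \<in> TA i a"
    and w': "w' \<in> disc_set k - sphere_set k" and u': "u' \<in> TA k a"
    and e: "\<iota>s (Suc i) a (\<Phi>s i a (w, u)) = \<iota>s (Suc k) a (\<Phi>s k a (w', u'))"
  shows "i = k \<and> w = w' \<and> u = u'"
proof -
  have ik: "i = k"
    using lt_impossible[OF a _ w u w' u' e] lt_impossible[OF a _ w' u' w u e[symmetric]]
    by (meson linorder_neqE_nat)
  have "\<Phi>s i a (w, u) \<in> TX (Suc i) a" using dmap_into[OF Phi_dmap a, of "(w,u)" i] w u by simp
  moreover have "\<Phi>s i a (w', u') \<in> TX (Suc i) a" using dmap_into[OF Phi_dmap a, of "(w',u')" i] w' u' ik by simp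
  ultimately have "\<Phi>s i a (w, u) = \<Phi>s i a (w', u')" using e ik iota_inj[OF a, of "Suc i"] by (auto dest: inj_onD)
  then have "(w, u) = (w', u')" using inj_onD[OF po_a(2)[OF a, of i]] w u w' u' ik by blast
  then show ?thesis using ik by simp
qed

end



context cwctx begin

theorem main: "of_type C F X"
  unfolding of_type_def
proof
  fix c assume "c \<in> colim_points C X"
  then obtain a x where a: "a \<in> Ob C" and x: "x \<in> topspace (Sp X a)" and c: "c = colim_class C X (a, x)"
    unfolding colim_points_def colim_carrier_def by auto
  obtain k w z where w: "w \<in> disc_set k - sphere_set k" and z: "z \<in> TA k a"
    and xe: "x = \<iota>s (Suc k) a (\<Phi>s k a (w, z))"
    using point_cell[OF a x] by blast
  obtain Q where Qd: "\<forall>q\<in>Q. \<forall>q'\<in>Q. q \<noteq> q' \<longrightarrow> q \<inter> q' = {}"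
    and Qc: "\<forall>a\<in>Ob C. TA k a \<subseteq> \<Union>Q"
    and Qi: "\<forall>q\<in>Q. \<forall>f\<in>Ar C. \<forall>x\<in>TA k (cdom C f) \<inter> q. Mp (As k) f x \<in> q"
    and Qo: "\<forall>q\<in>Q. \<exists>Orb\<in>F. dspace_iso C (sub_dsp (As k) q) Orb"
    using cop[of k] unfolding is_orbit_coproduct_def apply - by (elim exE conjE) (rule that)
  obtain q where q: "q \<in> Q" "z \<in> q" using Qc a z by blast
  obtain Orb where Orb: "Orb \<in> F" "dspace_iso C (sub_dsp (As k) q) Orb" using Qo q by blast
  define \<eta> where "\<eta> b z' = \<iota>s (Suc k) b (\<Phi>s k b (w, z'))" for b z'
  define W where "W b = \<eta> b ` (TA k b \<inter> q)" for b
  have Tsub: "topspace (Sp (sub_dsp (As k) q) b) = TA k b \<inter> q" for b by simp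
  have subcl: "\<forall>f\<in>Ar C. \<forall>x\<in>topspace (Sp (sub_dsp (As k) q) (cdom C f)).
      Mp (sub_dsp (As k) q) f x \<in> topspace (Sp (sub_dsp (As k) q) (ccod C f))"
    using dspace_cl[OF Asd] Qi q(1) by auto
  have rel_all: "colim_rel C (sub_dsp (As k) q) p p'"
    if "p \<in> colim_carrier C (sub_dsp (As k) q)" "p' \<in> colim_carrier C (sub_dsp (As k) q)" for p p'
    using orbit_all_related[OF cat _ Orb(2) subcl that] orbs Orb(1) by blast
  have eta_into: "\<eta> b z' \<in> topspace (Sp X b)" if "b \<in> Ob C" "z' \<in> TA k b" for b z'
  proof -
    have "\<Phi>s k b (w, z') \<in> TX (Suc k) b" using dmap_into[OF Phi_dmap that(1), of "(w, z')"] w that(2) by simp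
    then show ?thesis unfolding \<eta>_def by (rule dmap_into[OF iota_dmap that(1)])
  qed
  have eta_nat: "\<eta> (ccod C f) (Mp (As k) f z') = Mp X f (\<eta> (cdom C f) z')"
    if "f \<in> Ar C" "z' \<in> TA k (cdom C f)" for f z'
    unfolding \<eta>_def using E_nat[OF that(1) _ that(2), of w] w by simp
  have eta_inj: "z1 = z2" if "b \<in> Ob C" "z1 \<in> TA k b" "z2 \<in> TA k b" "\<eta> b z1 = \<eta> b z2" for b z1 z2
    using cell_unique[OF that(1) w that(2) w that(3)] that(4) unfolding \<eta>_def by blast
  have xeta: "x = \<eta> a z" unfolding \<eta>_def xe ..
  have sup: "(b, \<eta> b z') \<in> c" if "b \<in> Ob C" "z' \<in> TA k b \<inter> q" for b z'
  proof -
    have "(a, z) \<in> colim_carrier C (sub_dsp (As k) q)" "(b, z') \<in> colim_carrier C (sub_dsp (As k) q)"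
      using a z q that unfolding colim_carrier_def by auto
    then have r: "colim_rel C (sub_dsp (As k) q) (a, z) (b, z')" using rel_all by blast
    have n: "\<forall>f\<in>Ar C. \<forall>x\<in>topspace (Sp (sub_dsp (As k) q) (cdom C f)).
        \<eta> (ccod C f) (Mp (sub_dsp (As k) q) f x) = Mp X f (\<eta> (cdom C f) x)" using eta_nat by simp
    have i: "\<forall>a\<in>Ob C. \<forall>x\<in>topspace (Sp (sub_dsp (As k) q) a). \<eta> a x \<in> topspace (Sp X a)"
      using eta_into by simp
    have "colim_rel C X (a, \<eta> a z) (b, \<eta> b z')"
      using conjunct1[OF colim_rel_map[OF cat subcl n i r \<open>(a, z) \<in> colim_carrier C (sub_dsp (As k) q)\<close>]]
      by simp
    then show ?thesis unfolding c colim_class_def colim_carrier_def xeta using that eta_into by auto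
  qed
  have sub: "b \<in> Ob C \<and> y \<in> W b" if "(b, y) \<in> c" for b y
  proof -
    have r: "colim_rel C X (a, x) (b, y)" using that unfolding c colim_class_def by simp
    have "\<forall>b y. p = (b, y) \<longrightarrow> b \<in> Ob C \<and> y \<in> W b" if "colim_rel C X (a, x) p" for p
      using that[unfolded colim_rel_def]
    proof (induction rule: rtranclp_induct)
      case base
      then show ?case using a z q unfolding W_def xeta by auto
    next
      case (step p1 p2)
      obtain b1 y1 where p1: "p1 = (b1, y1)" by (cases p1)
      have h1: "b1 \<in> Ob C" "y1 \<in> W b1" using step.IH p1 by auto
      from step.hyps(2) show ?case
      proof
        assume "colim_step C X p1 p2"
        then obtain f y0 where f: "f \<in> Ar C" "y0 \<in> topspace (Sp X (cdom C f))"
          "p1 = (cdom C f, y0)" "p2 = (ccod C f, Mp X f y0)" unfolding colim_step_def by blast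
        obtain z' where z': "z' \<in> TA k (cdom C f) \<inter> q" "y0 = \<eta> (cdom C f) z'"
          using h1 f(3) p1 unfolding W_def by auto
        have "Mp (As k) f z' \<in> TA k (ccod C f) \<inter> q" using subcl f(1) z'(1) by simp
        moreover have "Mp X f y0 = \<eta> (ccod C f) (Mp (As k) f z')" using eta_nat[OF f(1)] z' by simp
        ultimately show ?case using f(4) cat_dom_cod[OF cat f(1)] unfolding W_def by auto
      next
        assume "colim_step C X p2 p1"
        then obtain f y0 where f: "f \<in> Ar C" "y0 \<in> topspace (Sp X (cdom C f))"
          "p2 = (cdom C f, y0)" "p1 = (ccod C f, Mp X f y0)" unfolding colim_step_def by blast
        have dO: "cdom C f \<in> Ob C" and cO: "ccod C f \<in> Ob C" using cat_dom_cod[OF cat f(1)] by auto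
        obtain z'' where z'': "z'' \<in> TA k (ccod C f) \<inter> q" "Mp X f y0 = \<eta> (ccod C f) z''"
          using h1 f(4) p1 unfolding W_def by auto
        obtain m w' u where wu: "w' \<in> disc_set m - sphere_set m" "u \<in> TA m (cdom C f)"
          "y0 = \<iota>s (Suc m) (cdom C f) (\<Phi>s m (cdom C f) (w', u))"
          using point_cell[OF dO f(2)] by blast
        have "Mp X f y0 = \<iota>s (Suc m) (ccod C f) (\<Phi>s m (ccod C f) (w', Mp (As m) f u))"
          using E_nat[OF f(1) _ wu(2), of w'] wu by simp
        moreover have "Mp (As m) f u \<in> TA m (ccod C f)" using dspace_cl[OF Asd f(1) wu(2)] .
        ultimately have "m = k \<and> w' = w \<and> Mp (As m) f u = z''"
          using cell_unique[OF cO wu(1) _ w, of "Mp (As m) f u" z''] z'' unfolding \<eta>_def by auto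
        then have mk: "m = k" and ww: "w' = w" and mu: "Mp (As k) f u = z''" by auto
        have uk: "u \<in> TA k (cdom C f)" using wu(2) mk by simp
        obtain q' where q': "q' \<in> Q" "u \<in> q'" using Qc dO uk by blast
        have "Mp (As k) f u \<in> q'" using Qi q' f(1) uk by blast
        then have "q' = q" using Qd q' q(1) mu z''(1) by blast
        then have "u \<in> TA k (cdom C f) \<inter> q" using uk q' by simp
        moreover have "y0 = \<eta> (cdom C f) u" using wu(3) mk ww unfolding \<eta>_def by simp
        ultimately show ?case using f(3) dO unfolding W_def by auto
      qed
    qed
    then show ?thesis using r by blast
  qed
  have orbit_top: "topspace (Sp (orbit_at C X c) b) = W b" if "b \<in> Ob C" for b
  proof -
    have "W b \<subseteq> topspace (Sp X b)" using eta_into that unfolding W_def by auto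
    then show ?thesis using sup[OF that] sub unfolding W_def by auto
  qed
  define \<theta> where "\<theta> b y = inv_into (TA k b \<inter> q) (\<eta> b) y" for b y
  have inj: "inj_on (\<eta> b) (TA k b \<inter> q)" if "b \<in> Ob C" for b
    using eta_inj[OF that] by (auto intro: inj_onI)
  have th1: "\<theta> b (\<eta> b z') = z'" if "b \<in> Ob C" "z' \<in> TA k b \<inter> q" for b z'
    unfolding \<theta>_def using inv_into_f_f[OF inj[OF that(1)] that(2)] .
  have th2a: "\<eta> b (\<theta> b y) = y" if "y \<in> W b" for b y
    unfolding \<theta>_def by (rule f_inv_into_f) (use that in \<open>simp add: W_def\<close>)
  have th2b: "\<theta> b y \<in> TA k b \<inter> q" if "y \<in> W b" for b y
    unfolding \<theta>_def by (rule inv_into_into) (use that in \<open>simp add: W_def\<close>)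
  note th2 = th2a th2b
  have iso1: "dspace_iso C (orbit_at C X c) (sub_dsp (As k) q)"
    unfolding dspace_iso_def
  proof (intro exI[of _ \<theta>] exI[of _ \<eta>] conjI ballI)
    show "is_dmap C (orbit_at C X c) (sub_dsp (As k) q) \<theta>"
      unfolding is_dmap_def
    proof (intro conjI ballI)
      fix b assume b: "b \<in> Ob C"
      show "continuous_map (Sp (orbit_at C X c) b) (Sp (sub_dsp (As k) q) b) (\<theta> b)"
        unfolding continuous_map_closedin
      proof (intro conjI allI impI)
        show "\<theta> b \<in> topspace (Sp (orbit_at C X c) b) \<rightarrow> topspace (Sp (sub_dsp (As k) q) b)"
          using th2(2) orbit_top[OF b] by auto
        fix K assume "closedin (Sp (sub_dsp (As k) q) b) K"
        then obtain K2 where K2: "closedin (Sp (As k) b) K2" "K = K2 \<inter> q"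
          unfolding Sp_sub closedin_subtopology by blast
        have K2T: "K2 \<subseteq> TA k b" using closedin_subset[OF K2(1)] .
        define T where "T = \<iota>s (Suc k) b ` \<Phi>s k b ` ({w} \<times> K2)"
        have Tc: "closedin (Sp X b) T" unfolding T_def
          by (rule iota_closed[OF b cell_point_closed[OF b w K2(1)]])
        have "{y \<in> topspace (Sp (orbit_at C X c) b). \<theta> b y \<in> K} = T \<inter> {y. (b, y) \<in> c}"
        proof (intro set_eqI iffI)
          fix y assume y: "y \<in> {y \<in> topspace (Sp (orbit_at C X c) b). \<theta> b y \<in> K}"
          then have yW: "y \<in> W b" using orbit_top[OF b] by auto
          then obtain z' where z': "z' \<in> TA k b \<inter> q" "y = \<eta> b z'" unfolding W_def by auto
          then have "z' \<in> K2" using y th1[OF b z'(1)] K2(2) by auto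
          then have "y \<in> T" unfolding T_def z'(2) \<eta>_def by auto
          then show "y \<in> T \<inter> {y. (b, y) \<in> c}" using y by auto
        next
          fix y assume y: "y \<in> T \<inter> {y. (b, y) \<in> c}"
          then have yW: "y \<in> W b" using sub by auto
          then obtain z' where z': "z' \<in> TA k b \<inter> q" "y = \<eta> b z'" unfolding W_def by auto
          obtain z2 where z2: "z2 \<in> K2" "y = \<eta> b z2" using y unfolding T_def \<eta>_def by auto
          have "z2 = z'" using eta_inj[OF b _ _ ] z2 z' K2T by auto
          then have "\<theta> b y \<in> K" using th1[OF b z'(1)] z' z2 K2(2) by auto
          then show "y \<in> {y \<in> topspace (Sp (orbit_at C X c) b). \<theta> b y \<in> K}"
            using yW orbit_top[OF b] by auto
        qed
        then show "closedin (Sp (orbit_at C X c) b) {y \<in> topspace (Sp (orbit_at C X c) b). \<theta> b y \<in> K}"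
          unfolding Sp_orbit closedin_subtopology using Tc by blast
      qed
    next
      fix f y assume f: "f \<in> Ar C" and y: "y \<in> topspace (Sp (orbit_at C X c) (cdom C f))"
      have dO: "cdom C f \<in> Ob C" and cO: "ccod C f \<in> Ob C" using cat_dom_cod[OF cat f] by auto
      obtain z' where z': "z' \<in> TA k (cdom C f) \<inter> q" "y = \<eta> (cdom C f) z'"
        using y orbit_top[OF dO] unfolding W_def by auto
      have m: "Mp (As k) f z' \<in> TA k (ccod C f) \<inter> q" using subcl f z'(1) by simp
      show "\<theta> (ccod C f) (Mp (orbit_at C X c) f y) = Mp (sub_dsp (As k) q) f (\<theta> (cdom C f) y)"
        using eta_nat[OF f, of z'] z' th1[OF cO m] th1[OF dO z'(1)] by simp
    qed
  next
    show "is_dmap C (sub_dsp (As k) q) (orbit_at C X c) \<eta>"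
      unfolding is_dmap_def
    proof (intro conjI ballI)
      fix b assume b: "b \<in> Ob C"
      have c1: "continuous_map (Sp (As k) b) (Sp (cell_dsp k (As k)) b) (\<lambda>z'. (w, z'))"
        unfolding cell_dsp_def using w
        by (auto intro!: continuous_map_pairedI continuous_map_id[unfolded id_def])
      have c2: "continuous_map (Sp (cell_dsp k (As k)) b) (Sp (Xs (Suc k)) b) (\<Phi>s k b)"
        using Phi_dmap b unfolding is_dmap_def by blast
      have c3: "continuous_map (Sp (Xs (Suc k)) b) (Sp X b) (\<iota>s (Suc k) b)"
        using iota_dmap b unfolding is_dmap_def by blast
      have "continuous_map (Sp (As k) b) (Sp X b) (\<eta> b)"
        unfolding \<eta>_def using continuous_map_compose[OF continuous_map_compose[OF c1 c2] c3]
        by (simp add: o_def)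
      then have "continuous_map (Sp (sub_dsp (As k) q) b) (Sp X b) (\<eta> b)"
        unfolding Sp_sub by (rule continuous_map_from_subtopology)
      then show "continuous_map (Sp (sub_dsp (As k) q) b) (Sp (orbit_at C X c) b) (\<eta> b)"
        unfolding Sp_orbit by (rule continuous_map_into_subtopology) (use sup[OF b] in auto)
    next
      fix f z' assume f: "f \<in> Ar C" and z': "z' \<in> topspace (Sp (sub_dsp (As k) q) (cdom C f))"
      show "\<eta> (ccod C f) (Mp (sub_dsp (As k) q) f z') = Mp (orbit_at C X c) f (\<eta> (cdom C f) z')"
        using eta_nat[OF f] z' by simp
    qed
  next
    fix b y assume b: "b \<in> Ob C" and y: "y \<in> topspace (Sp (orbit_at C X c) b)"
    then show "\<eta> b (\<theta> b y) = y" using th2(1) orbit_top[OF b] by auto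
  next
    fix b z' assume b: "b \<in> Ob C" and z': "z' \<in> topspace (Sp (sub_dsp (As k) q) b)"
    then show "\<theta> b (\<eta> b z') = z'" using th1 by simp
  qed
  show "\<exists>Orb\<in>F. dspace_iso C (orbit_at C X c) Orb"
    using iso_trans[OF cat iso1 Orb(2)] Orb(1) by blast
qed

end

theorem proposition6p4:
  fixes C :: "('o, 'm) cat"
    and F :: "('o, 'm, 'e) dsp set"
    and X :: "('o, 'm, 'a) dsp"
    and Xs :: "nat \<Rightarrow> ('o, 'm, 'b) dsp"
    and js :: "nat \<Rightarrow> 'o \<Rightarrow> 'b \<Rightarrow> 'b"
    and As :: "nat \<Rightarrow> ('o, 'm, 'c) dsp"
    and \<Phi>s :: "nat \<Rightarrow> 'o \<Rightarrow> (nat \<Rightarrow> real) \<times> 'c \<Rightarrow> 'b"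
    and \<iota>s :: "nat \<Rightarrow> 'o \<Rightarrow> 'b \<Rightarrow> 'a"
  assumes "is_category C"
    and "\<forall>Orb\<in>F. is_dorbit C Orb"
    and "is_dspace C X"
    and "dcw_structure C F X Xs js As \<Phi>s \<iota>s"
  shows "of_type C F X"
  by (rule cwctx.main[OF cwctx.intro[OF assms]])


end
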